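(* Let $T\in S(n,d)$ and let $\sigma$ be a simplex on $\gamma_d$ with vertices among the $n$ points of $C(n,d)$. Then $\sigma\le_{d+1}T$ if and only if for every $\tau\in T$, either $\sigma$ and $\tau$ do not overlap in $\mathbb{R}^d$ or $\sigma<_{d+1}\tau$.
   Context: $\gamma_d=\{(t,t^2,\dots,t^d):t\in\mathbb{R}\}$. Fix $t_1<\dots<t_n$ and the points $\gamma_d(t_i)$, identified with $i\in[n]$; $C(n,d)$ is their convex hull (cyclic polytope). $S(n,d)$ is the set of triangulations of $C(n,d)$ (geometric simplicial complexes with union $C(n,d)$) whose vertices lie in $[n]$. A simplex is a subset $\sigma$ of size at most $d+1$, identified with $\mathrm{conv}(\sigma)$; two simplices overlap if $\mathrm{conv}(\sigma)\cap\mathrm{conv}(\tau)\supsetneq\mathrm{conv}(\sigma\cap\tau)$. For $\sigma=\{\gamma_d(s_1),\dots,\gamma_d(s_k)\}$, the height function $h_\sigma:\mathrm{conv}(\sigma)\to\mathbb{R}$ gives the last coordinate of the point of $\mathrm{conv}\{\gamma_{d+1}(s_1),\dots,\gamma_{d+1}(s_k)\}$ projecting (by deleting the last coordinate) to $p$. $\sigma<_{d+1}\tau$ means $\sigma,\tau$ overlap in $\mathbb{R}^d$ and $h_\sigma\le h_\tau$ on the common domain. For $T\in S(n,d)$, $h_T:C(n,d)\to\mathbb{R}$ is defined by $h_T(p)=h_\tau(p)$ for $p\in\mathrm{conv}(\tau)$, $\tau\in T$ (well defined). $\sigma\le_{d+1}T$ means $h_\sigma(p)\le h_T(p)$ for all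 $p\in\mathrm{conv}(\sigma)$. *)

theory Defs
  imports Complex_Main
begin

text \<open>Points of R^m are represented as functions nat => real whose coordinates
  1..m are meaningful (all other coordinates are 0 for the points considered).
  The parameters of the n points are t 1 < ... < t n; point i is gamma_d(t i).\<close>

definition gam :: "nat \<Rightarrow> real \<Rightarrow> (nat \<Rightarrow> real)" where
  "gam d s = (\<lambda>k. if 1 \<le> k \<and> k \<le> d then s ^ k else 0)"

definition conv :: "nat \<Rightarrow> (nat \<Rightarrow> real) \<Rightarrow> nat set \<Rightarrow> (nat \<Rightarrow> real) set" where
  "conv d t \<sigma> = {p. \<exists>a :: nat \<Rightarrow> real. (\<forall>i\<in>\<sigma>. 0 \<le> a i) \<and> sum a \<sigma> = 1 \<and>
                     p = (\<lambda>k. \<Sum>i\<in>\<sigma>. a i * gam d (t i) k)}"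

definition proj :: "nat \<Rightarrow> (nat \<Rightarrow> real) \<Rightarrow> (nat \<Rightarrow> real)" where
  "proj d q = q(Suc d := 0)"

definition height :: "nat \<Rightarrow> (nat \<Rightarrow> real) \<Rightarrow> nat set \<Rightarrow> (nat \<Rightarrow> real) \<Rightarrow> real" where
  "height d t \<sigma> p = (THE y. \<exists>q\<in>conv (Suc d) t \<sigma>. proj d q = p \<and> q (Suc d) = y)"

definition is_simplex :: "nat \<Rightarrow> nat \<Rightarrow> nat set \<Rightarrow> bool" where
  "is_simplex n d \<sigma> \<longleftrightarrow> \<sigma> \<subseteq> {1..n} \<and> card \<sigma> \<le> Suc d"

definition overlap :: "nat \<Rightarrow> (nat \<Rightarrow> real) \<Rightarrow> nat set \<Rightarrow> nat set \<Rightarrow> bool" where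
  "overlap d t \<sigma> \<tau> \<longleftrightarrow> conv d t (\<sigma> \<inter> \<tau>) \<subset> conv d t \<sigma> \<inter> conv d t \<tau>"

definition below :: "nat \<Rightarrow> (nat \<Rightarrow> real) \<Rightarrow> nat set \<Rightarrow> nat set \<Rightarrow> bool" where
  "below d t \<sigma> \<tau> \<longleftrightarrow> overlap d t \<sigma> \<tau> \<and>
     (\<forall>p \<in> conv d t \<sigma> \<inter> conv d t \<tau>. height d t \<sigma> p \<le> height d t \<tau> p)"

text \<open>Triangulations S(n,d): geometric simplicial complexes (nonempty simplices,
  closed under nonempty faces, any two meeting in a common face, i.e. not overlapping)
  with vertices in [n] whose union is C(n,d).\<close>
definition triang :: "nat \<Rightarrow> nat \<Rightarrow> (nat \<Rightarrow> real) \<Rightarrow> nat set set \<Rightarrow> bool" where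
  "triang n d t T \<longleftrightarrow> finite T \<and>
     (\<forall>\<sigma>\<in>T. is_simplex n d \<sigma> \<and> \<sigma> \<noteq> {}) \<and>
     (\<forall>\<sigma>\<in>T. \<forall>\<rho>. \<rho> \<subseteq> \<sigma> \<and> \<rho> \<noteq> {} \<longrightarrow> \<rho> \<in> T) \<and>
     (\<forall>\<sigma>\<in>T. \<forall>\<tau>\<in>T. \<not> overlap d t \<sigma> \<tau>) \<and>
     (\<Union>\<tau>\<in>T. conv d t \<tau>) = conv d t {1..n}"

definition height_T :: "nat \<Rightarrow> (nat \<Rightarrow> real) \<Rightarrow> nat set set \<Rightarrow> (nat \<Rightarrow> real) \<Rightarrow> real" where
  "height_T d t T p = (THE y. \<exists>\<tau>\<in>T. p \<in> conv d t \<tau> \<and> y = height d t \<tau> p)"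

definition below_T :: "nat \<Rightarrow> (nat \<Rightarrow> real) \<Rightarrow> nat set \<Rightarrow> nat set set \<Rightarrow> bool" where
  "below_T d t \<sigma> T \<longleftrightarrow> (\<forall>p\<in>conv d t \<sigma>. height d t \<sigma> p \<le> height_T d t T p)"

end

theory Submission
  imports Defs "HOL-Computational_Algebra.Polynomial"
begin

lemma vand:
  fixes c t :: "nat \<Rightarrow> real"
  assumes fin: "finite R" and cR: "card R \<le> Suc d" and inj: "inj_on t R"
    and z: "\<forall>k\<le>d. (\<Sum>i\<in>R. c i * t i ^ k) = 0" and j: "j \<in> R"
  shows "c j = 0"
proof -
  define P where "P = (\<Prod>i\<in>R-{j}. [:- t i, 1:])"
  have "degree P \<le> sum (degree \<circ> (\<lambda>i. [:- t i, 1:])) (R-{j})"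
    unfolding P_def by (rule degree_prod_sum_le) (use fin in auto)
  also have "\<dots> = card (R-{j})" by simp
  also have "\<dots> \<le> d" using cR j fin by (simp add: card_Diff_singleton)
  finally have dP: "degree P \<le> d" .
  have "(\<Sum>i\<in>R. c i * poly P (t i)) = (\<Sum>i\<in>R. \<Sum>k\<le>degree P. coeff P k * (c i * t i ^ k))"
    by (simp add: poly_altdef sum_distrib_left mult_ac)
  also have "\<dots> = (\<Sum>k\<le>degree P. coeff P k * (\<Sum>i\<in>R. c i * t i ^ k))"
    by (subst sum.swap) (simp add: sum_distrib_left)
  also have "\<dots> = 0" using z dP by simp
  finally have s0: "(\<Sum>i\<in>R. c i * poly P (t i)) = 0" .
  have "(\<Sum>i\<in>R. c i * poly P (t i)) = c j * poly P (t j) + (\<Sum>i\<in>R-{j}. c i * poly P (t i))"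
    using fin j by (simp add: sum.remove)
  also have "(\<Sum>i\<in>R-{j}. c i * poly P (t i)) = 0"
  proof (rule sum.neutral, rule ballI)
    fix i assume i: "i \<in> R - {j}"
    have "poly P (t i) = (\<Prod>i'\<in>R-{j}. t i - t i')" unfolding P_def poly_prod by simp
    also have "\<dots> = 0" using i fin by (intro prod_zero) auto
    finally show "c i * poly P (t i) = 0" by simp
  qed
  finally have "c j * poly P (t j) = 0" using s0 by simp
  moreover have "poly P (t j) \<noteq> 0"
  proof -
    have "poly P (t j) = (\<Prod>i'\<in>R-{j}. t j - t i')" unfolding P_def poly_prod by simp
    also have "\<dots> \<noteq> 0" using fin inj j by (subst prod_zero_iff) (auto dest: inj_onD)
    finally show ?thesis .
  qed
  ultimately show ?thesis by simp
qed


definition good :: "nat \<Rightarrow> (nat \<Rightarrow> real) \<Rightarrow> nat set \<Rightarrow> bool" where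
  "good d t R \<longleftrightarrow> finite R \<and> card R \<le> Suc d \<and> inj_on t R"

lemma good_subset: "good d t R \<Longrightarrow> R' \<subseteq> R \<Longrightarrow> good d t R'"
  unfolding good_def by (meson card_mono finite_subset inj_on_subset le_trans)

lemma good_simplex: "strict_mono_on {1..n} t \<Longrightarrow> is_simplex n d R \<Longrightarrow> good d t R"
  unfolding good_def is_simplex_def
  by (meson finite_atLeastAtMost finite_subset inj_on_subset strict_mono_on_imp_inj_on)

lemma conv_mono:
  assumes fin: "finite R" and sub: "R' \<subseteq> R"
  shows "conv d t R' \<subseteq> conv d t R"
proof
  fix p assume "p \<in> conv d t R'"
  then obtain a where a: "\<forall>i\<in>R'. 0 \<le> a i" "sum a R' = 1"
    "p = (\<lambda>k. \<Sum>i\<in>R'. a i * gam d (t i) k)" unfolding conv_def by blast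
  define b where "b i = (if i \<in> R' then a i else 0)" for i
  have "sum b R = sum b R'" using fin sub by (intro sum.mono_neutral_right) (auto simp: b_def)
  also have "\<dots> = 1" using a by (simp add: b_def)
  finally have sb: "sum b R = 1" .
  have "p = (\<lambda>k. \<Sum>i\<in>R. b i * gam d (t i) k)"
  proof
    fix k
    have "(\<Sum>i\<in>R. b i * gam d (t i) k) = (\<Sum>i\<in>R'. b i * gam d (t i) k)"
      using fin sub by (intro sum.mono_neutral_right) (auto simp: b_def)
    then show "p k = (\<Sum>i\<in>R. b i * gam d (t i) k)" using a by (simp add: b_def)
  qed
  moreover have "\<forall>i\<in>R. 0 \<le> b i" using a by (simp add: b_def)
  ultimately show "p \<in> conv d t R" using sb unfolding conv_def by blast
qed

lemma lift_exists:
  assumes "p \<in> conv d t R"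
  shows "\<exists>q\<in>conv (Suc d) t R. proj d q = p"
proof -
  obtain a where a: "\<forall>i\<in>R. 0 \<le> a i" "sum a R = 1"
    "p = (\<lambda>k. \<Sum>i\<in>R. a i * gam d (t i) k)" using assms unfolding conv_def by blast
  define q where "q = (\<lambda>k. \<Sum>i\<in>R. a i * gam (Suc d) (t i) k)"
  have "q \<in> conv (Suc d) t R" using a unfolding conv_def q_def by blast
  moreover have "proj d q = p"
  proof
    fix k show "proj d q k = p k"
      by (cases "k = Suc d") (auto simp: proj_def q_def a(3) gam_def intro!: sum.cong)
  qed
  ultimately show ?thesis by blast
qed

lemma lift_unique:
  assumes g: "good d t R" and q: "q \<in> conv (Suc d) t R" and q': "q' \<in> conv (Suc d) t R"
    and pq: "proj d q = proj d q'"
  shows "q = q'"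
proof -
  obtain a where a: "\<forall>i\<in>R. 0 \<le> a i" "sum a R = 1"
    "q = (\<lambda>k. \<Sum>i\<in>R. a i * gam (Suc d) (t i) k)" using q unfolding conv_def by blast
  obtain b where b: "\<forall>i\<in>R. 0 \<le> b i" "sum b R = 1"
    "q' = (\<lambda>k. \<Sum>i\<in>R. b i * gam (Suc d) (t i) k)" using q' unfolding conv_def by blast
  have fin: "finite R" "card R \<le> Suc d" "inj_on t R" using g unfolding good_def by auto
  have z: "\<forall>k\<le>d. (\<Sum>i\<in>R. (a i - b i) * t i ^ k) = 0"
  proof (intro allI impI)
    fix k assume k: "k \<le> d"
    show "(\<Sum>i\<in>R. (a i - b i) * t i ^ k) = 0"
    proof (cases "k = 0")
      case True then show ?thesis using a b by (simp add: sum_subtractf)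
    next
      case False
      have "proj d q k = proj d q' k" using pq by simp
      then have "q k = q' k" using k by (simp add: proj_def)
      then have "(\<Sum>i\<in>R. a i * t i ^ k) = (\<Sum>i\<in>R. b i * t i ^ k)"
        using a b k False by (simp add: gam_def)
      then show ?thesis by (simp add: sum_subtractf left_diff_distrib)
    qed
  qed
  have ab: "\<forall>i\<in>R. a i = b i"
  proof
    fix j assume "j \<in> R"
    from vand[OF fin z this] show "a j = b j" by simp
  qed
  show ?thesis
  proof
    fix k
    have "(\<Sum>i\<in>R. a i * gam (Suc d) (t i) k) = (\<Sum>i\<in>R. b i * gam (Suc d) (t i) k)"
      by (rule sum.cong) (simp_all add: ab)
    then show "q k = q' k" by (simp only: a(3) b(3))
  qed
qed

lemma height_eq:
  assumes g: "good d t R" and q: "q \<in> conv (Suc d) t R"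
  shows "height d t R (proj d q) = q (Suc d)"
  unfolding height_def
proof (rule the_equality)
  show "\<exists>q'\<in>conv (Suc d) t R. proj d q' = proj d q \<and> q' (Suc d) = q (Suc d)" using q by blast
next
  fix y assume "\<exists>q'\<in>conv (Suc d) t R. proj d q' = proj d q \<and> q' (Suc d) = y"
  then obtain q' where q': "q' \<in> conv (Suc d) t R" "proj d q' = proj d q" "q' (Suc d) = y" by blast
  have "q' = q" by (rule lift_unique[OF g q'(1) q q'(2)])
  then show "y = q (Suc d)" using q'(3) by simp
qed

lemma height_face:
  assumes g: "good d t R" and sub: "R' \<subseteq> R" and p: "p \<in> conv d t R'"
  shows "height d t R' p = height d t R p"
proof -
  obtain q where q: "q \<in> conv (Suc d) t R'" "proj d q = p" using lift_exists[OF p] by blast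
  have g': "good d t R'" using good_subset[OF g sub] .
  have fin: "finite R" using g unfolding good_def by auto
  have q2: "q \<in> conv (Suc d) t R" using conv_mono[OF fin sub] q by blast
  show ?thesis using height_eq[OF g' q(1)] height_eq[OF g q2] q(2) by simp
qed

lemma no_overlap:
  assumes fin: "finite A" "finite B" and "\<not> overlap d t A B"
  shows "conv d t A \<inter> conv d t B = conv d t (A \<inter> B)"
proof -
  have "conv d t (A \<inter> B) \<subseteq> conv d t A \<inter> conv d t B"
    using conv_mono[OF fin(1), of "A \<inter> B"] conv_mono[OF fin(2), of "A \<inter> B"] by blast
  then show ?thesis using assms(3) unfolding overlap_def by blast
qed

lemma triang_simp: assumes "triang n d t T" "\<sigma> \<in> T" shows "is_simplex n d \<sigma>"
proof -
  have "\<forall>\<sigma>\<in>T. is_simplex n d \<sigma> \<and> \<sigma> \<noteq> {}" using assms(1) unfolding triang_def by (elim conjE)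
  then show ?thesis using assms(2) by blast
qed

lemma triang_nov: assumes "triang n d t T" "\<sigma> \<in> T" "\<tau> \<in> T" shows "\<not> overlap d t \<sigma> \<tau>"
proof -
  have "\<forall>\<sigma>\<in>T. \<forall>\<tau>\<in>T. \<not> overlap d t \<sigma> \<tau>" using assms(1) unfolding triang_def by (elim conjE)
  then show ?thesis using assms(2,3) by blast
qed

lemma triang_cov: assumes "triang n d t T" "p \<in> conv d t {1..n}" shows "\<exists>\<tau>\<in>T. p \<in> conv d t \<tau>"
proof -
  have "(\<Union>\<tau>\<in>T. conv d t \<tau>) = conv d t {1..n}" using assms(1) unfolding triang_def by (elim conjE)
  then show ?thesis using assms(2) by blast
qed

lemma heightT_eq:
  assumes sm: "strict_mono_on {1..n} t" and tr: "triang n d t T" and tau: "\<tau> \<in> T"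
    and p: "p \<in> conv d t \<tau>"
  shows "height_T d t T p = height d t \<tau> p"
  unfolding height_T_def
proof (rule the_equality)
  show "\<exists>\<tau>'\<in>T. p \<in> conv d t \<tau>' \<and> height d t \<tau> p = height d t \<tau>' p" using tau p by blast
next
  fix y assume "\<exists>\<tau>'\<in>T. p \<in> conv d t \<tau>' \<and> y = height d t \<tau>' p"
  then obtain \<tau>' where t': "\<tau>' \<in> T" "p \<in> conv d t \<tau>'" "y = height d t \<tau>' p" by blast
  have g1: "good d t \<tau>" using good_simplex[OF sm triang_simp[OF tr tau]] .
  have g2: "good d t \<tau>'" using good_simplex[OF sm triang_simp[OF tr t'(1)]] .
  have "\<not> overlap d t \<tau> \<tau>'" using triang_nov[OF tr tau t'(1)] .
  then have eq: "conv d t \<tau> \<inter> conv d t \<tau>' = conv d t (\<tau> \<inter> \<tau>')"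
    using no_overlap[of \<tau> \<tau>' d t] g1 g2 unfolding good_def by blast
  have pi: "p \<in> conv d t (\<tau> \<inter> \<tau>')" using eq p t'(2) by blast
  have "height d t (\<tau> \<inter> \<tau>') p = height d t \<tau> p" by (rule height_face[OF g1 _ pi]) blast
  moreover have "height d t (\<tau> \<inter> \<tau>') p = height d t \<tau>' p" by (rule height_face[OF g2 _ pi]) blast
  ultimately have "height d t \<tau>' p = height d t \<tau> p" by simp
  then show "y = height d t \<tau> p" using t'(3) by simp
qed

theorem lemma2p9:
  fixes n d :: nat and t :: "nat \<Rightarrow> real" and T :: "nat set set" and \<sigma> :: "nat set"
  assumes "strict_mono_on {1..n} t"
    and "triang n d t T"
    and "is_simplex n d \<sigma>"
  shows "below_T d t \<sigma> T \<longleftrightarrow> (\<forall>\<tau>\<in>T. \<not> overlap d t \<sigma> \<tau> \<or> below d t \<sigma> \<tau>)"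
proof
  assume b: "below_T d t \<sigma> T"
  show "\<forall>\<tau>\<in>T. \<not> overlap d t \<sigma> \<tau> \<or> below d t \<sigma> \<tau>"
  proof (intro ballI)
    fix \<tau> assume tau: "\<tau> \<in> T"
    show "\<not> overlap d t \<sigma> \<tau> \<or> below d t \<sigma> \<tau>"
    proof (cases "overlap d t \<sigma> \<tau>")
      case False then show ?thesis by simp
    next
      case ov: True
    have "below d t \<sigma> \<tau>" unfolding below_def
    proof (intro conjI ballI)
      show "overlap d t \<sigma> \<tau>" using ov by simp
    next
      fix p assume "p \<in> conv d t \<sigma> \<inter> conv d t \<tau>"
      then show "height d t \<sigma> p \<le> height d t \<tau> p"
        using b heightT_eq[OF assms(1,2) tau] unfolding below_T_def by auto
    qed
    then show ?thesis by simp
    qed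
  qed
next
  assume r: "\<forall>\<tau>\<in>T. \<not> overlap d t \<sigma> \<tau> \<or> below d t \<sigma> \<tau>"
  have gs: "good d t \<sigma>" using good_simplex[OF assms(1,3)] .
  show "below_T d t \<sigma> T" unfolding below_T_def
  proof
    fix p assume p: "p \<in> conv d t \<sigma>"
    have "\<sigma> \<subseteq> {1..n}" using assms(3) unfolding is_simplex_def by auto
    then have "p \<in> conv d t {1..n}" using conv_mono[of "{1..n}" \<sigma> d t] p by auto
    then obtain \<tau> where tau: "\<tau> \<in> T" "p \<in> conv d t \<tau>"
      using triang_cov[OF assms(2)] by blast
    have gt: "good d t \<tau>" using good_simplex[OF assms(1) triang_simp[OF assms(2) tau(1)]] .
    have hT: "height_T d t T p = height d t \<tau> p" using heightT_eq[OF assms(1,2) tau] .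
    show "height d t \<sigma> p \<le> height_T d t T p"
    proof (cases "overlap d t \<sigma> \<tau>")
      case True
      then show ?thesis using r tau p hT unfolding below_def by auto
    next
      case False
      then have pi: "p \<in> conv d t (\<sigma> \<inter> \<tau>)" using no_overlap[of \<sigma> \<tau> d t] gs gt p tau(2)
        unfolding good_def by blast
      have "height d t (\<sigma> \<inter> \<tau>) p = height d t \<sigma> p" "height d t (\<sigma> \<inter> \<tau>) p = height d t \<tau> p"
        using height_face[OF gs _ pi] height_face[OF gt _ pi] by auto
      then show ?thesis using hT by simp
    qed
  qed
qed

end
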